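(* Let $R>0$, $d\ge1$, $\Lambda^d_R=\{x\in\mathbb{R}^d:\|x\|_2\le R\}$, and let $X=\{x^{(1)},\dots,x^{(n)}\}\subset\Lambda^d_R$. Let $w\in\mathbb{R}^n$ with $\left(\sum_{i=1}^n|w_i|\right)^2\le\xi$, and let $\alpha>0$. Then for every positive integer $s$, \[ w^T\left(K_X-K^{\mathsf{HD}}_{X,s}\right)w\le\left(\sum_{i=1}^n|w_i|\right)^2\exp(2R^2)\left(\frac{2eR^2}{s}\right)^s, \] and moreover this quantity is at most $\alpha$ when $s=\Theta\!\left(\frac{\log\frac{\xi\exp(2R^2)}{\alpha}}{\log\left(\frac{1}{2eR^2}\log\frac{\xi\exp(2R^2)}{\alpha}\right)}\right)$ (with a sufficiently large constant).
   Context: $K_X$ is the $n\times n$ matrix with $(K_X)_{i,j}=\exp(-\|x^{(i)}-x^{(j)}\|^2)$. For a positive integer $s$, $K^{\mathsf{HD}}_{X,s}$ is the $n\times n$ matrix with \[ (K^{\mathsf{HD}}_{X,s})_{i,j}=\sum_{a=0}^{s-1}\left\langle e^{-\|x^{(i)}\|^2}\sqrt{\tfrac{2^a}{a!}}(x^{(i)})^{\otimes a},\ e^{-\|x^{(j)}\|^2}\sqrt{\tfrac{2^a}{a!}}(x^{(j)})^{\otimes a}\right\rangle, \] where $x^{\otimes 0}=1$, $x^{\otimes a}=x\otimes x^{\otimes(a-1)}\in\mathbb{R}^{d^a}$ (Kronecker product) and $\langle\cdot,\cdot\rangle$ is the standard inner product. *)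

theory Defs
  imports "HOL-Analysis.Analysis"
begin

text \<open>Points of R^d are vectors of type real^'d (d = CARD('d) >= 1).
  The a-fold Kronecker power of x is represented as a function on index tuples
  (lists of length a over the coordinate type); its entry at (i_1,...,i_a) is
  x_{i_1} * ... * x_{i_a}.\<close>

definition gauss_kernel :: "real^'d \<Rightarrow> real^'d \<Rightarrow> real" where
  "gauss_kernel x y = exp (- (norm (x - y))\<^sup>2)"

definition tensor_power :: "real^'d \<Rightarrow> nat \<Rightarrow> ('d::finite) list \<Rightarrow> real" where
  "tensor_power x a = (\<lambda>is. \<Prod>i\<leftarrow>is. x $ i)"

definition tensor_inner :: "nat \<Rightarrow> (('d::finite) list \<Rightarrow> real) \<Rightarrow> ('d list \<Rightarrow> real) \<Rightarrow> real" where
  "tensor_inner a f g = (\<Sum>is\<in>{is::'d list. length is = a}. f is * g is)"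

definition hd_feature :: "real^'d \<Rightarrow> nat \<Rightarrow> ('d::finite) list \<Rightarrow> real" where
  "hd_feature x a = (\<lambda>is. exp (- (norm x)\<^sup>2) * sqrt (2 ^ a / fact a) * tensor_power x a is)"

definition hd_kernel :: "nat \<Rightarrow> real^('d::finite) \<Rightarrow> real^'d \<Rightarrow> real" where
  "hd_kernel s x y = (\<Sum>a<s. tensor_inner a (hd_feature x a) (hd_feature y a))"

definition K_mat :: "(nat \<Rightarrow> real^'d) \<Rightarrow> nat \<Rightarrow> nat \<Rightarrow> real" where
  "K_mat X i j = gauss_kernel (X i) (X j)"

definition KHD_mat :: "nat \<Rightarrow> (nat \<Rightarrow> real^('d::finite)) \<Rightarrow> nat \<Rightarrow> nat \<Rightarrow> real" where
  "KHD_mat s X i j = hd_kernel s (X i) (X j)"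

end

theory Submission imports Defs begin

lemma lists_sum_prod:
  fixes f :: "'d::finite \<Rightarrow> real"
  shows "(\<Sum>is\<in>{is::'d list. length is = a}. \<Prod>i\<leftarrow>is. f i) = (\<Sum>i\<in>UNIV. f i) ^ a"
proof (induction a)
  case 0
  have "{is::'d list. length is = 0} = {[]}" by auto
  then show ?case by simp
next
  case (Suc a)
  have eq: "{is::'d list. length is = Suc a} = (\<lambda>(xs, n). n#xs) ` ({is::'d list. length is = a} \<times> UNIV)"
    using lists_length_Suc_eq[of "UNIV::'d set" a] by simp
  have fin: "finite {is::'d list. length is = a}"
    using finite_lists_length_eq[of "UNIV::'d set" a] by simp
  have inj: "inj_on (\<lambda>(xs, n). n#xs) ({is::'d list. length is = a} \<times> (UNIV::'d set))"
    by (auto simp: inj_on_def)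
  have "(\<Sum>is\<in>{is::'d list. length is = Suc a}. \<Prod>i\<leftarrow>is. f i)
      = (\<Sum>p\<in>{is::'d list. length is = a} \<times> UNIV. (\<lambda>is. \<Prod>i\<leftarrow>is. f i) ((\<lambda>(xs, n). n#xs) p))"
    unfolding eq by (subst sum.reindex[OF inj]) (simp add: o_def)
  also have "\<dots> = (\<Sum>xs\<in>{is::'d list. length is = a}. \<Sum>n\<in>UNIV. f n * (\<Prod>i\<leftarrow>xs. f i))"
    by (simp add: sum.cartesian_product split_def)
  also have "\<dots> = (\<Sum>xs\<in>{is::'d list. length is = a}. (\<Prod>i\<leftarrow>xs. f i)) * (\<Sum>n\<in>UNIV. f n)"
    by (simp add: sum_distrib_right sum_distrib_left mult.commute)
  finally show ?case using Suc by simp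
qed

lemma prod_list_mult_map: "(\<Prod>i\<leftarrow>xs. (f i::real) * g i) = (\<Prod>i\<leftarrow>xs. f i) * (\<Prod>i\<leftarrow>xs. g i)"
  by (induction xs) auto

lemma tensor_inner_hd:
  fixes x y :: "real^'d::finite"
  shows "tensor_inner a (hd_feature x a) (hd_feature y a)
     = exp (- (norm x)\<^sup>2 - (norm y)\<^sup>2) * ((2 * (x \<bullet> y)) ^ a / fact a)"
proof -
  have "tensor_inner a (hd_feature x a) (hd_feature y a)
     = (\<Sum>is\<in>{is::'d list. length is = a}. (exp (- (norm x)\<^sup>2) * exp (- (norm y)\<^sup>2) * (2 ^ a / fact a)) * (\<Prod>i\<leftarrow>is. x $ i * y $ i))"
    unfolding tensor_inner_def hd_feature_def tensor_power_def
    apply (rule sum.cong, simp)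
    apply (simp add: prod_list_mult_map)
    apply (simp add: field_simps)
    done
  also have "\<dots> = exp (- (norm x)\<^sup>2) * exp (- (norm y)\<^sup>2) * (2 ^ a / fact a) * (x \<bullet> y) ^ a"
    by (subst sum_distrib_left[symmetric], subst lists_sum_prod, simp add: inner_vec_def)
  also have "\<dots> = exp (- (norm x)\<^sup>2 - (norm y)\<^sup>2) * ((2 * (x \<bullet> y)) ^ a / fact a)"
    by (simp add: exp_diff exp_minus power_mult_distrib field_simps)
  finally show ?thesis .
qed

lemma pow_fact_le_exp:
  fixes x :: real assumes "x \<ge> 0" shows "x ^ n / fact n \<le> exp x"
proof -
  have "(\<lambda>m. x ^ m /\<^sub>R fact m) sums exp x" by (rule exp_converges)
  hence s: "(\<lambda>m. x ^ m / fact m) sums exp x" by (simp add: divide_inverse mult.commute)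
  have "sum (\<lambda>m. x ^ m / fact m) {n} \<le> suminf (\<lambda>m. x ^ m / fact m)"
    using assms by (intro sum_le_suminf sums_summable[OF s]) auto
  thus ?thesis using sums_unique[OF s] by simp
qed

lemma entry_bound:
  fixes x y :: "real^'d::finite"
  assumes "norm x \<le> R" "norm y \<le> R" "s > 0"
  shows "\<bar>gauss_kernel x y - hd_kernel s x y\<bar> \<le> exp (2 * R\<^sup>2) * (2 * exp 1 * R\<^sup>2 / real s) ^ s"
proof -
  define t where "t = 2 * (x \<bullet> y)"
  have R0: "0 \<le> R" using assms(1) norm_ge_zero[of x] by linarith
  have "\<bar>x \<bullet> y\<bar> \<le> norm x * norm y" by (rule Cauchy_Schwarz_ineq2)
  also have "\<dots> \<le> R * R" using assms R0 by (intro mult_mono) auto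
  finally have tb: "\<bar>t\<bar> \<le> 2 * R\<^sup>2" unfolding t_def by (simp add: power2_eq_square abs_mult)
  have nxy: "(norm (x - y))\<^sup>2 = (norm x)\<^sup>2 + (norm y)\<^sup>2 - t"
    unfolding t_def by (simp add: power2_norm_eq_inner inner_diff_left inner_diff_right inner_commute)
  have gk: "gauss_kernel x y = exp (- (norm x)\<^sup>2 - (norm y)\<^sup>2) * exp t"
    unfolding gauss_kernel_def nxy by (simp add: exp_add[symmetric])
  have hk: "hd_kernel s x y = exp (- (norm x)\<^sup>2 - (norm y)\<^sup>2) * (\<Sum>m<s. t ^ m / fact m)"
    unfolding hd_kernel_def tensor_inner_hd t_def by (simp add: sum_distrib_left)
  obtain u where u: "\<bar>u\<bar> \<le> \<bar>t\<bar>" "exp t = (\<Sum>m<s. (t ^ m) / fact m) + (exp u / fact s) * t ^ s"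
    using Maclaurin_exp_le by blast
  have e1: "exp (- (norm x)\<^sup>2 - (norm y)\<^sup>2) \<le> 1" by simp
  have "\<bar>gauss_kernel x y - hd_kernel s x y\<bar> = exp (- (norm x)\<^sup>2 - (norm y)\<^sup>2) * (exp u / fact s * \<bar>t\<bar> ^ s)"
    unfolding gk hk u(2) by (simp add: algebra_simps abs_mult power_abs)
  also have "\<dots> \<le> 1 * (exp u / fact s * \<bar>t\<bar> ^ s)"
    by (intro mult_right_mono e1) auto
  also have "\<dots> \<le> exp (2 * R\<^sup>2) / fact s * (2 * R\<^sup>2) ^ s"
  proof -
    have p: "\<bar>t\<bar> ^ s \<le> (2 * R\<^sup>2) ^ s" by (rule power_mono[OF tb]) simp
    have q: "exp u / fact s \<le> exp (2 * R\<^sup>2) / fact s" using u(1) tb by (intro divide_right_mono) auto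
    show ?thesis using mult_mono[OF q p] by simp
  qed
  also have "\<dots> \<le> exp (2 * R\<^sup>2) * (2 * exp 1 * R\<^sup>2 / real s) ^ s"
  proof -
    have "real s ^ s / fact s \<le> exp (real s)" by (rule pow_fact_le_exp) simp
    hence f: "real s ^ s \<le> exp (real s) * fact s" by (simp add: divide_le_eq)
    have "exp (2 * R\<^sup>2) / fact s * (2 * R\<^sup>2) ^ s * real s ^ s
        \<le> exp (2 * R\<^sup>2) / fact s * (2 * R\<^sup>2) ^ s * (exp (real s) * fact s)"
      by (intro mult_left_mono f) auto
    also have "\<dots> = exp (2 * R\<^sup>2) * (2 * exp 1 * R\<^sup>2) ^ s"
      by (simp add: power_mult_distrib exp_of_nat_mult[symmetric] field_simps)
    finally show ?thesis using assms(3) by (simp add: power_divide field_simps)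
  qed
  finally show ?thesis .
qed

lemma part2_core:
  fixes b L :: real and s :: nat
  assumes b: "b > 0" and u1: "L / b > 1" and sge: "real s \<ge> 2 * (L / ln (L / b))"
  shows "real s * ln (real s / b) \<ge> L"
proof -
  define u where "u = L / b"
  have u1': "u > 1" using u1 u_def by simp
  have lu: "ln u > 0" using u1' by simp
  have L: "L = b * u" using b u_def by simp
  have sq: "ln u \<le> 2 * sqrt u"
  proof -
    have "ln u = 2 * ln (sqrt u)" using u1' by (simp add: ln_sqrt)
    also have "\<dots> \<le> 2 * (sqrt u - 1)" using ln_le_minus_one[of "sqrt u"] u1' by simp
    finally show ?thesis by simp
  qed
  define s0 where "s0 = 2 * (L / ln u)"
  have s0pos: "s0 > 0" using lu L b u1' unfolding s0_def by simp
  have "sqrt u * ln u \<le> sqrt u * (2 * sqrt u)" using sq u1' by (intro mult_left_mono) auto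
  also have "\<dots> = 2 * u" using u1' by simp
  finally have "sqrt u * ln u \<le> 2 * u" .
  hence s0b: "sqrt u \<le> s0 / b" unfolding s0_def L using b lu by (simp add: field_simps)
  have sgs0: "real s \<ge> s0" using sge u_def s0_def by simp
  have "ln u / 2 = ln (sqrt u)" using u1' by (simp add: ln_sqrt)
  also have "\<dots> \<le> ln (s0 / b)" using s0b u1' s0pos b by (subst ln_le_cancel_iff) auto
  also have "\<dots> \<le> ln (real s / b)" using sgs0 s0pos b by (simp add: divide_right_mono)
  finally have lnb: "ln u / 2 \<le> ln (real s / b)" .
  have "L = s0 * (ln u / 2)" unfolding s0_def using lu by simp
  also have "\<dots> \<le> real s * ln (real s / b)"
    using sgs0 lnb s0pos lu by (intro mult_mono) auto
  finally show ?thesis .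
qed

lemma pow_exp_form:
  fixes b :: real and s :: nat assumes "b > 0" "s > 0"
  shows "(b / real s) ^ s = exp (- (real s * ln (real s / b)))"
proof -
  have "(b / real s) ^ s = exp (ln (b / real s)) ^ s" using assms by simp
  also have "\<dots> = exp (real s * ln (b / real s))" by (simp add: exp_of_nat_mult)
  also have "ln (b / real s) = - ln (real s / b)" using assms by (simp add: ln_div)
  finally show ?thesis by simp
qed

theorem lemma2p7:
  shows
   "(\<forall>(R::real) (n::nat) (X :: nat \<Rightarrow> real^('d::finite)) (w :: nat \<Rightarrow> real) (s::nat).
       R > 0 \<longrightarrow> (\<forall>i<n. norm (X i) \<le> R) \<longrightarrow> s > 0 \<longrightarrow>
       (\<Sum>i<n. \<Sum>j<n. w i * (K_mat X i j - KHD_mat s X i j) * w j)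
         \<le> (\<Sum>i<n. \<bar>w i\<bar>)\<^sup>2 * exp (2 * R\<^sup>2) * (2 * exp 1 * R\<^sup>2 / real s) ^ s)
    \<and>
    (\<exists>C>0. \<forall>(R::real) (n::nat) (w :: nat \<Rightarrow> real) (\<xi>::real) (\<alpha>::real) (s::nat).
       R > 0 \<longrightarrow> \<alpha> > 0 \<longrightarrow> (\<Sum>i<n. \<bar>w i\<bar>)\<^sup>2 \<le> \<xi> \<longrightarrow> \<xi> > 0 \<longrightarrow>
       (let L = ln (\<xi> * exp (2 * R\<^sup>2) / \<alpha>) in
         L / (2 * exp 1 * R\<^sup>2) > 1 \<longrightarrow> s > 0 \<longrightarrow>
         real s \<ge> C * (L / ln (L / (2 * exp 1 * R\<^sup>2))) \<longrightarrow>
         (\<Sum>i<n. \<bar>w i\<bar>)\<^sup>2 * exp (2 * R\<^sup>2) * (2 * exp 1 * R\<^sup>2 / real s) ^ s \<le> \<alpha>))"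
proof (rule conjI)
  show "\<forall>(R::real) (n::nat) (X :: nat \<Rightarrow> real^('d::finite)) (w :: nat \<Rightarrow> real) (s::nat).
       R > 0 \<longrightarrow> (\<forall>i<n. norm (X i) \<le> R) \<longrightarrow> s > 0 \<longrightarrow>
       (\<Sum>i<n. \<Sum>j<n. w i * (K_mat X i j - KHD_mat s X i j) * w j)
         \<le> (\<Sum>i<n. \<bar>w i\<bar>)\<^sup>2 * exp (2 * R\<^sup>2) * (2 * exp 1 * R\<^sup>2 / real s) ^ s"
  proof (intro allI impI)
    fix R :: real and n :: nat and X :: "nat \<Rightarrow> real^'d" and w :: "nat \<Rightarrow> real" and s :: nat
    assume R: "R > 0" and X: "\<forall>i<n. norm (X i) \<le> R" and s: "s > 0"
    define B where "B = exp (2 * R\<^sup>2) * (2 * exp 1 * R\<^sup>2 / real s) ^ s"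
    have "(\<Sum>i<n. \<Sum>j<n. w i * (K_mat X i j - KHD_mat s X i j) * w j)
        \<le> (\<Sum>i<n. \<Sum>j<n. \<bar>w i\<bar> * B * \<bar>w j\<bar>)"
    proof (intro sum_mono)
      fix i j assume i: "i \<in> {..<n}" and j: "j \<in> {..<n}"
      have E: "\<bar>K_mat X i j - KHD_mat s X i j\<bar> \<le> B"
        unfolding K_mat_def KHD_mat_def B_def using X i j s by (intro entry_bound) auto
      have "w i * (K_mat X i j - KHD_mat s X i j) * w j \<le> \<bar>w i * (K_mat X i j - KHD_mat s X i j) * w j\<bar>" by simp
      also have "\<dots> = \<bar>w i\<bar> * \<bar>K_mat X i j - KHD_mat s X i j\<bar> * \<bar>w j\<bar>" by (simp add: abs_mult)
      also have "\<dots> \<le> \<bar>w i\<bar> * B * \<bar>w j\<bar>" using E by (intro mult_right_mono mult_left_mono) auto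
      finally show "w i * (K_mat X i j - KHD_mat s X i j) * w j \<le> \<bar>w i\<bar> * B * \<bar>w j\<bar>" .
    qed
    also have "\<dots> = (\<Sum>i<n. \<bar>w i\<bar>)\<^sup>2 * B"
      by (simp add: power2_eq_square sum_distrib_left sum_distrib_right mult_ac)
    finally show "(\<Sum>i<n. \<Sum>j<n. w i * (K_mat X i j - KHD_mat s X i j) * w j)
         \<le> (\<Sum>i<n. \<bar>w i\<bar>)\<^sup>2 * exp (2 * R\<^sup>2) * (2 * exp 1 * R\<^sup>2 / real s) ^ s"
      unfolding B_def by (simp add: mult_ac)
  qed
next
  show "\<exists>C>0. \<forall>(R::real) (n::nat) (w :: nat \<Rightarrow> real) (\<xi>::real) (\<alpha>::real) (s::nat).
       R > 0 \<longrightarrow> \<alpha> > 0 \<longrightarrow> (\<Sum>i<n. \<bar>w i\<bar>)\<^sup>2 \<le> \<xi> \<longrightarrow> \<xi> > 0 \<longrightarrow>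
       (let L = ln (\<xi> * exp (2 * R\<^sup>2) / \<alpha>) in
         L / (2 * exp 1 * R\<^sup>2) > 1 \<longrightarrow> s > 0 \<longrightarrow>
         real s \<ge> C * (L / ln (L / (2 * exp 1 * R\<^sup>2))) \<longrightarrow>
         (\<Sum>i<n. \<bar>w i\<bar>)\<^sup>2 * exp (2 * R\<^sup>2) * (2 * exp 1 * R\<^sup>2 / real s) ^ s \<le> \<alpha>)"
  proof (rule exI[of _ 2], simp only: Let_def, intro conjI allI impI)
    show "(0::real) < 2" by simp
    fix R :: real and n :: nat and w :: "nat \<Rightarrow> real" and \<xi> \<alpha> :: real and s :: nat
    assume R: "R > 0" and a: "\<alpha> > 0" and xi: "(\<Sum>i<n. \<bar>w i\<bar>)\<^sup>2 \<le> \<xi>" and xi0: "\<xi> > 0"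
      and u1: "ln (\<xi> * exp (2 * R\<^sup>2) / \<alpha>) / (2 * exp 1 * R\<^sup>2) > 1" and s: "s > 0"
      and sge: "real s \<ge> 2 * (ln (\<xi> * exp (2 * R\<^sup>2) / \<alpha>) / ln (ln (\<xi> * exp (2 * R\<^sup>2) / \<alpha>) / (2 * exp 1 * R\<^sup>2)))"
    define L where "L = ln (\<xi> * exp (2 * R\<^sup>2) / \<alpha>)"
    define b where "b = 2 * exp 1 * R\<^sup>2"
    have b: "b > 0" using R unfolding b_def by simp
    have core: "real s * ln (real s / b) \<ge> L"
      using part2_core[OF b, of L s] u1 sge unfolding L_def b_def by simp
    have eL: "exp L = \<xi> * exp (2 * R\<^sup>2) / \<alpha>" unfolding L_def using xi0 a by simp
    have "(\<Sum>i<n. \<bar>w i\<bar>)\<^sup>2 * exp (2 * R\<^sup>2) * (b / real s) ^ s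
        \<le> \<xi> * exp (2 * R\<^sup>2) * exp (- L)"
    proof (rule mult_mono)
      show "(\<Sum>i<n. \<bar>w i\<bar>)\<^sup>2 * exp (2 * R\<^sup>2) \<le> \<xi> * exp (2 * R\<^sup>2)" using xi by simp
      show "(b / real s) ^ s \<le> exp (- L)" unfolding pow_exp_form[OF b s] using core by simp
    qed (use xi0 b in auto)
    also have "\<dots> = \<alpha>" using eL a by (simp add: exp_minus field_simps)
    finally show "(\<Sum>i<n. \<bar>w i\<bar>)\<^sup>2 * exp (2 * R\<^sup>2) * (2 * exp 1 * R\<^sup>2 / real s) ^ s \<le> \<alpha>"
      unfolding b_def .
  qed
qed

end
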